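(* Let $p$ be prime and $H\le\mathrm{S}_n$ be in $\mathfrak{InP}(\mathrm{C}_p)$ with $|H|=p^s$, let $\gamma$ be as in the context, and let $M\in\mathrm{M}(s,k,p)$ be a generator matrix of $\gamma(H)$. Let $\beta$ be a point in the $H$-orbit $\Omega_j$. If the column $M_{*,j}$ is non-zero in exactly one row, say row $i$, then $\gamma(H_\beta)$ is the row space of the matrix obtained from $M$ by deleting row $i$.
   Context: $H\le\mathrm{S}_{n}$, $n=pk$, has orbits $\Omega_1,\dots,\Omega_k$ of size $p$ with each $G_i:=H|_{\Omega_i}$ cyclic of order $p$; $G=G_1\times\dots\times G_k$, $g_i$ a generator of $G_i$, and $\gamma:G\to\mathbb{F}_p^k$ the isomorphism $\gamma(g_1^{r_1}\cdots g_k^{r_k})=(r_1,\dots,r_k)$. A generator matrix of $\gamma(H)$ is an $s\times k$ matrix over $\mathbb{F}_p$ whose rows form a basis of $\gamma(H)$. $H_\beta$ is the point stabiliser. *)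

theory Defs
  imports "Berlekamp_Zassenhaus.Finite_Field" "Jordan_Normal_Form.Matrix"
    "HOL-Combinatorics.Permutations"
begin

definition restrict_perm :: "('a \<Rightarrow> 'a) \<Rightarrow> 'a set \<Rightarrow> ('a \<Rightarrow> 'a)" where
  "restrict_perm h A = (\<lambda>x. if x \<in> A then h x else x)"

definition perm_subgroup :: "('a \<Rightarrow> 'a) set \<Rightarrow> 'a set \<Rightarrow> bool" where
  "perm_subgroup H X \<longleftrightarrow> (\<forall>h\<in>H. h permutes X) \<and> id \<in> H \<and>
     (\<forall>g\<in>H. \<forall>h\<in>H. g \<circ> h \<in> H) \<and> (\<forall>h\<in>H. inv_into UNIV h \<in> H)"

definition orbit_of :: "('a \<Rightarrow> 'a) set \<Rightarrow> 'a \<Rightarrow> 'a set" where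
  "orbit_of H x = {h x | h. h \<in> H}"

definition constituent :: "('a \<Rightarrow> 'a) set \<Rightarrow> 'a set \<Rightarrow> ('a \<Rightarrow> 'a) set" where
  "constituent H A = (\<lambda>h. restrict_perm h A) ` H"

text \<open>H lies in InP(C_p) with orbits Omega_0..Omega_(k-1) (0-indexed): the sets Omega_i
  are pairwise disjoint, each of size p, they are exactly the H-orbits on X,
  and each constituent H|Omega_i is cyclic of order p.\<close>
definition InP_Cp :: "nat \<Rightarrow> ('a \<Rightarrow> 'a) set \<Rightarrow> 'a set \<Rightarrow> nat \<Rightarrow> (nat \<Rightarrow> 'a set) \<Rightarrow> bool" where
  "InP_Cp p H X k \<Omega> \<longleftrightarrow> perm_subgroup H X \<and> X = (\<Union>i<k. \<Omega> i) \<and>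
     (\<forall>i<k. \<forall>i'<k. i \<noteq> i' \<longrightarrow> \<Omega> i \<inter> \<Omega> i' = {}) \<and>
     (\<forall>i<k. card (\<Omega> i) = p \<and> (\<forall>x\<in>\<Omega> i. orbit_of H x = \<Omega> i)) \<and>
     (\<forall>i<k. card (constituent H (\<Omega> i)) = p \<and>
        (\<exists>g\<in>constituent H (\<Omega> i). constituent H (\<Omega> i) = {g ^^ m | m. True}))"

definition generators :: "('a \<Rightarrow> 'a) set \<Rightarrow> nat \<Rightarrow> (nat \<Rightarrow> 'a set) \<Rightarrow> (nat \<Rightarrow> 'a \<Rightarrow> 'a) \<Rightarrow> bool" where
  "generators H k \<Omega> g \<longleftrightarrow> (\<forall>i<k. g i \<in> constituent H (\<Omega> i) \<and>
       constituent H (\<Omega> i) = {g i ^^ m | m. True})"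

text \<open>gamma(g_1^r_1 ... g_k^r_k) = (r_1,...,r_k) over F_p = 'p mod_ring, for h in H
  (an element h of H equals the product of its constituents h|Omega_i).\<close>
definition gamma :: "nat \<Rightarrow> (nat \<Rightarrow> 'a set) \<Rightarrow> (nat \<Rightarrow> 'a \<Rightarrow> 'a) \<Rightarrow> ('a \<Rightarrow> 'a)
    \<Rightarrow> 'p::prime_card mod_ring vec" where
  "gamma k \<Omega> g h = vec k (\<lambda>i. THE r. restrict_perm h (\<Omega> i) = g i ^^ nat (to_int_mod_ring r))"

definition row_space :: "'f::field mat \<Rightarrow> 'f vec set" where
  "row_space M = {transpose_mat M *\<^sub>v c | c. c \<in> carrier_vec (dim_row M)}"

definition generator_matrix :: "'f::field mat \<Rightarrow> 'f vec set \<Rightarrow> bool" where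
  "generator_matrix M V \<longleftrightarrow> row_space M = V \<and>
     (\<forall>c\<in>carrier_vec (dim_row M). transpose_mat M *\<^sub>v c = 0\<^sub>v (dim_col M) \<longrightarrow> c = 0\<^sub>v (dim_row M))"

definition delete_row :: "'f mat \<Rightarrow> nat \<Rightarrow> 'f mat" where
  "delete_row M i = mat (dim_row M - 1) (dim_col M)
     (\<lambda>(a, b). M $$ (if a < i then a else Suc a, b))"

definition point_stabiliser :: "('a \<Rightarrow> 'a) set \<Rightarrow> 'a \<Rightarrow> ('a \<Rightarrow> 'a) set" where
  "point_stabiliser H \<beta> = {h \<in> H. h \<beta> = \<beta>}"

end

theory Submission
  imports Defs
begin


lemma funpow_cancel:
  fixes G :: "'a \<Rightarrow> 'a"
  assumes "inj G" "a \<le> b" "G^^a = G^^b"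
  shows "G^^(b-a) = id"
proof -
  have "G^^b = G^^a \<circ> G^^(b-a)" using assms(2) by (metis funpow_add le_add_diff_inverse)
  hence "G^^a \<circ> G^^(b-a) = G^^a \<circ> id" using assms(3) by simp
  moreover have "inj (G^^a)" using inj_fn[OF assms(1)] .
  ultimately show ?thesis
  proof -
    assume e: "G^^a \<circ> G^^(b-a) = G^^a \<circ> id" and i: "inj (G^^a)"
    show ?thesis
    proof
      fix x
      have "(G^^a) ((G^^(b-a)) x) = (G^^a) (id x)" using fun_cong[OF e, of x] by simp
      thus "(G^^(b-a)) x = id x" using injD[OF i] by blast
    qed
  qed
qed

lemma funpow_mod_id:
  assumes "G^^d = id"
  shows "G^^m = G^^(m mod d)"
proof
  fix x show "(G^^m) x = (G^^(m mod d)) x" using funpow_mod_eq[where f=G and n=d and m=m and x=x] assms by simp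
qed

lemma powers_order:
  fixes G :: "'a \<Rightarrow> 'a"
  assumes "inj G" "card {G^^m |m. True} = p" "p > 0"
  shows "G^^p = id \<and> inj_on (\<lambda>m. G^^m) {..<p}"
proof -
  let ?S = "{G^^m |m. True}"
  have fin: "finite ?S" using assms(2,3) card_ge_0_finite by blast
  have inj: "inj_on (\<lambda>m. G^^m) {..<p}"
  proof (rule ccontr)
    assume "\<not> ?thesis"
    then obtain a0 b0 where ab0: "a0 < p" "b0 < p" "a0 \<noteq> b0" "G^^a0 = G^^b0"
      unfolding inj_on_def by auto
    then obtain a b where ab: "a < b" "b < p" "G^^a = G^^b"
    proof (cases "a0 < b0")
      case True thus ?thesis using ab0 that by blast
    next
      case False thus ?thesis using ab0 that[of b0 a0] by simp
    qed
    define d where "d = b - a"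
    have d: "G^^d = id" "0 < d" "d < p" using funpow_cancel[OF assms(1), of a b] ab d_def by auto
    have "?S \<subseteq> (\<lambda>m. G^^m) ` {..<d}"
    proof
      fix x assume "x \<in> ?S" then obtain m where "x = G^^m" by blast
      then have "x = G^^(m mod d)" using funpow_mod_id[OF d(1)] by simp
      then show "x \<in> (\<lambda>m. G^^m) ` {..<d}" using d(2) by auto
    qed
    hence "card ?S \<le> card ((\<lambda>m. G^^m) ` {..<d})" by (intro card_mono) auto
    also have "\<dots> \<le> d" using card_image_le[of "{..<d}" "\<lambda>m. G^^m"] by simp
    finally have "card ?S \<le> d" .
    thus False using assms(2) d by simp
  qed
  have sub: "(\<lambda>m. G^^m) ` {..<p} \<subseteq> ?S" by auto
  have "card ((\<lambda>m. G^^m) ` {..<p}) = p" using card_image[OF inj] by simp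
  hence eq: "(\<lambda>m. G^^m) ` {..<p} = ?S" using card_subset_eq[OF fin sub] assms(2) by simp
  have "G^^p \<in> (\<lambda>m. G^^m) ` {..<p}" unfolding eq by blast
  then obtain a where a: "a < p" "G^^p = G^^a" by auto
  have pa: "G^^(p-a) = id" using funpow_cancel[OF assms(1), of a p] a by simp
  have "a = 0"
  proof (rule ccontr)
    assume "a \<noteq> 0"
    hence "p - a < p" "p - a \<noteq> 0" using a by auto
    hence "p - a = 0" using inj_onD[OF inj, of "p-a" 0] pa by simp
    thus False using \<open>p - a \<noteq> 0\<close> by simp
  qed
  thus ?thesis using a inj by simp
qed



lemma tmv_comp:
  fixes M :: "'f::field mat"
  assumes "dim_row M = s" "l < dim_col M" "c \<in> carrier_vec s"
  shows "(transpose_mat M *\<^sub>v c) $ l = (\<Sum>r<s. M $$ (r, l) * c $ r)"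
  using assms by (auto simp: scalar_prod_def lessThan_atLeast0 intro!: sum.cong)

lemma sum_skip:
  fixes F :: "nat \<Rightarrow> 'f::comm_monoid_add"
  assumes "i < s" "F i = 0"
  shows "(\<Sum>r<s. F r) = (\<Sum>a<s-1. F (if a < i then a else Suc a))"
proof -
  have "(\<Sum>r<s. F r) = F i + (\<Sum>r\<in>{..<s}-{i}. F r)"
    using assms(1) by (simp add: sum.remove)
  also have "\<dots> = (\<Sum>r\<in>{..<s}-{i}. F r)" using assms(2) by simp
  also have "\<dots> = (\<Sum>a<s-1. F (if a < i then a else Suc a))"
  proof (rule sum.reindex_bij_betw[symmetric])
    show "bij_betw (\<lambda>a. if a < i then a else Suc a) {..<s-1} ({..<s}-{i})"
    proof (rule bij_betw_imageI)
      show "inj_on (\<lambda>a. if a < i then a else Suc a) {..<s-1}"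
        by (auto simp: inj_on_def split: if_splits)
      show "(\<lambda>a. if a < i then a else Suc a) ` {..<s-1} = {..<s}-{i}"
      proof
        show "(\<lambda>a. if a < i then a else Suc a) ` {..<s-1} \<subseteq> {..<s}-{i}" using assms(1) by auto
        show "{..<s}-{i} \<subseteq> (\<lambda>a. if a < i then a else Suc a) ` {..<s-1}"
        proof
          fix r assume r: "r \<in> {..<s}-{i}"
          show "r \<in> (\<lambda>a. if a < i then a else Suc a) ` {..<s-1}"
          proof (cases "r < i")
            case True thus ?thesis using r assms(1) by (intro image_eqI[of _ _ r]) auto
          next
            case False thus ?thesis using r by (intro image_eqI[of _ _ "r - 1"]) auto
          qed
        qed
      qed
    qed
  qed
  finally show ?thesis .
qed

lemma sum_single:
  fixes F :: "nat \<Rightarrow> 'f::comm_monoid_add"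
  assumes "i < s" "\<forall>r<s. r \<noteq> i \<longrightarrow> F r = 0"
  shows "(\<Sum>r<s. F r) = F i"
proof -
  have "(\<Sum>r<s. F r) = F i + (\<Sum>r\<in>{..<s}-{i}. F r)"
    using assms(1) by (simp add: sum.remove)
  also have "(\<Sum>r\<in>{..<s}-{i}. F r) = 0" using assms(2) by (intro sum.neutral) auto
  finally show ?thesis by simp
qed

lemma row_space_delete:
  fixes M :: "'f::field mat"
  assumes M: "M \<in> carrier_mat s k" and j: "j < k" and i: "i < s"
    and col: "\<forall>r<s. M $$ (r, j) \<noteq> 0 \<longleftrightarrow> r = i"
  shows "{v \<in> row_space M. v $ j = 0} = row_space (delete_row M i)"
proof -
  define f where "f = (\<lambda>a::nat. if a < i then a else Suc a)"
  have dr: "dim_row (delete_row M i) = s - 1" "dim_col (delete_row M i) = k"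
    using M by (auto simp: delete_row_def)
  have de: "delete_row M i $$ (a, l) = M $$ (f a, l)" if "a < s - 1" "l < k" for a l
    using M that by (simp add: delete_row_def f_def)
  have fs: "f a < s" if "a < s - 1" for a using that i by (auto simp: f_def)
  have jcomp: "(transpose_mat M *\<^sub>v c) $ j = M $$ (i, j) * c $ i" if c: "c \<in> carrier_vec s" for c
  proof -
    have "(transpose_mat M *\<^sub>v c) $ j = (\<Sum>r<s. M $$ (r, j) * c $ r)"
      using tmv_comp[of M s j c] M j c by auto
    also have "\<dots> = M $$ (i, j) * c $ i" using col by (intro sum_single[OF i]) auto
    finally show ?thesis .
  qed
  have key: "transpose_mat M *\<^sub>v c = transpose_mat (delete_row M i) *\<^sub>v d"
    if c: "c \<in> carrier_vec s" and d: "d \<in> carrier_vec (s - 1)" and ci: "c $ i = 0"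
      and cd: "\<forall>a<s-1. c $ f a = d $ a" for c d
  proof (rule eq_vecI)
    show "dim_vec (transpose_mat M *\<^sub>v c) = dim_vec (transpose_mat (delete_row M i) *\<^sub>v d)"
      using M dr by simp
    fix l assume "l < dim_vec (transpose_mat (delete_row M i) *\<^sub>v d)"
    hence l: "l < k" using dr by simp
    have "(transpose_mat M *\<^sub>v c) $ l = (\<Sum>r<s. M $$ (r, l) * c $ r)"
      using tmv_comp[of M s l c] M l c by auto
    also have "\<dots> = (\<Sum>a<s-1. M $$ (f a, l) * c $ f a)"
      using sum_skip[OF i, of "\<lambda>r. M $$ (r, l) * c $ r"] ci by (simp add: f_def)
    also have "\<dots> = (\<Sum>a<s-1. delete_row M i $$ (a, l) * d $ a)"
      using cd de l by (intro sum.cong) auto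
    also have "\<dots> = (transpose_mat (delete_row M i) *\<^sub>v d) $ l"
      using tmv_comp[of "delete_row M i" "s - 1" l d] dr l d by auto
    finally show "(transpose_mat M *\<^sub>v c) $ l = (transpose_mat (delete_row M i) *\<^sub>v d) $ l" .
  qed
  show ?thesis
  proof
    show "{v \<in> row_space M. v $ j = 0} \<subseteq> row_space (delete_row M i)"
    proof
      fix v assume "v \<in> {v \<in> row_space M. v $ j = 0}"
      then obtain c where c: "c \<in> carrier_vec s" "v = transpose_mat M *\<^sub>v c" "v $ j = 0"
        using M unfolding row_space_def by auto
      have "M $$ (i, j) \<noteq> 0" using col i by auto
      hence ci: "c $ i = 0" using jcomp[OF c(1)] c by simp
      define d where "d = vec (s - 1) (\<lambda>a. c $ f a)"
      have d: "d \<in> carrier_vec (s - 1)" unfolding d_def by simp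
      have "v = transpose_mat (delete_row M i) *\<^sub>v d"
        using key[OF c(1) d ci] c(2) by (simp add: d_def)
      thus "v \<in> row_space (delete_row M i)" using d dr unfolding row_space_def by auto
    qed
    show "row_space (delete_row M i) \<subseteq> {v \<in> row_space M. v $ j = 0}"
    proof
      fix v assume "v \<in> row_space (delete_row M i)"
      then obtain d where d: "d \<in> carrier_vec (s - 1)" "v = transpose_mat (delete_row M i) *\<^sub>v d"
        using dr unfolding row_space_def by auto
      define c where "c = vec s (\<lambda>r. if r < i then d $ r else if r = i then 0 else d $ (r - 1))"
      have c: "c \<in> carrier_vec s" unfolding c_def by simp
      have ci: "c $ i = 0" using i by (simp add: c_def)
      have cd: "\<forall>a<s-1. c $ f a = d $ a" using fs by (auto simp: c_def f_def)
      have v: "v = transpose_mat M *\<^sub>v c" using key[OF c d(1) ci cd] d(2) by simp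
      have "v $ j = 0" using jcomp[OF c] ci v by simp
      thus "v \<in> {v \<in> row_space M. v $ j = 0}" using v c M unfolding row_space_def by auto
    qed
  qed
qed



lemma inj_restrict_perm:
  assumes "inj h" "\<forall>x\<in>A. h x \<in> A"
  shows "inj (restrict_perm h A)"
  using assms unfolding inj_def restrict_perm_def by (metis)

lemma funpow_fix: "f x = x \<Longrightarrow> (f^^n) x = x"
  by (induction n) auto

theorem lemma5p1:
  fixes H :: "('a \<Rightarrow> 'a) set" and X :: "'a set" and k s :: nat
    and \<Omega> :: "nat \<Rightarrow> 'a set" and g :: "nat \<Rightarrow> 'a \<Rightarrow> 'a"
    and M :: "'p::prime_card mod_ring mat" and i j :: nat and \<beta> :: 'a
  assumes "InP_Cp CARD('p) H X k \<Omega>"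
    and "card H = CARD('p) ^ s"
    and "generators H k \<Omega> g"
    and "M \<in> carrier_mat s k"
    and "generator_matrix M (gamma k \<Omega> g ` H)"
    and "j < k" and "\<beta> \<in> \<Omega> j"
    and "i < s" and "\<forall>r<s. M $$ (r, j) \<noteq> 0 \<longleftrightarrow> r = i"
  shows "gamma k \<Omega> g ` point_stabiliser H \<beta> = row_space (delete_row M i)"
proof -
  let ?p = "CARD('p)"
  let ?C = "constituent H (\<Omega> j)"
  define G where "G = g j"
  have pp: "prime ?p" by (rule prime_card)
  hence p1: "?p > 1" using prime_gt_1_nat by blast
  have perm: "\<forall>h\<in>H. h permutes X" and idH: "id \<in> H" and XU: "X = (\<Union>i<k. \<Omega> i)"
    using assms(1) unfolding InP_Cp_def perm_subgroup_def by auto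
  have orb: "\<forall>x\<in>\<Omega> j. orbit_of H x = \<Omega> j" and cardO: "card (\<Omega> j) = ?p"
    and cardC: "card ?C = ?p"
    using assms(1,6) unfolding InP_Cp_def by auto
  have GC: "G \<in> ?C" and Cpow: "?C = {G ^^ m | m. True}"
    using assms(3,6) unfolding generators_def G_def by auto
  have inv: "h x \<in> \<Omega> j" if "h \<in> H" "x \<in> \<Omega> j" for h x
    using orb that unfolding orbit_of_def by blast
  have injG: "inj G"
  proof -
    obtain h0 where h0: "h0 \<in> H" "G = restrict_perm h0 (\<Omega> j)"
      using GC unfolding constituent_def by auto
    have "inj h0" using perm h0(1) permutes_inj by blast
    thus ?thesis using h0 inv inj_restrict_perm by metis
  qed
  have po: "G^^?p = id \<and> inj_on (\<lambda>m. G^^m) {..<?p}"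
    using powers_order[OF injG] cardC Cpow p1 by simp
  have Gb: "G \<beta> \<noteq> \<beta>"
  proof
    assume Gb: "G \<beta> = \<beta>"
    have "h \<beta> = \<beta>" if h: "h \<in> H" for h
    proof -
      have "restrict_perm h (\<Omega> j) \<in> ?C" using h unfolding constituent_def by auto
      then obtain m where "restrict_perm h (\<Omega> j) = G^^m" using Cpow by auto
      hence "restrict_perm h (\<Omega> j) \<beta> = \<beta>" using funpow_fix[of G \<beta> m] Gb by simp
      thus ?thesis using assms(7) unfolding restrict_perm_def by simp
    qed
    hence "orbit_of H \<beta> = {\<beta>}" using idH unfolding orbit_of_def by (auto intro!: exI[of _ id])
    hence "\<Omega> j = {\<beta>}" using orb assms(7) by simp
    thus False using cardO p1 by simp
  qed
  have stab: "h \<beta> = \<beta> \<longleftrightarrow> (gamma k \<Omega> g h :: 'p mod_ring vec) $ j = 0" if h: "h \<in> H" for h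
  proof -
    define \<rho> where "\<rho> = restrict_perm h (\<Omega> j)"
    have "\<rho> \<in> ?C" using h unfolding constituent_def \<rho>_def by auto
    then obtain m where "\<rho> = G^^m" using Cpow by auto
    define a where "a = m mod ?p"
    have a: "a < ?p" using p1 unfolding a_def by simp
    have \<rho>a: "\<rho> = G^^a" using \<open>\<rho> = G^^m\<close> funpow_mod_id[where G=G and d="?p" and m=m] po unfolding a_def by simp
    have gj: "(gamma k \<Omega> g h :: 'p mod_ring vec) $ j = of_int_mod_ring (int a)"
    proof -
      have "(gamma k \<Omega> g h :: 'p mod_ring vec) $ j = (THE r. \<rho> = G ^^ nat (to_int_mod_ring r))"
        using assms(6) unfolding gamma_def \<rho>_def G_def by simp
      also have "\<dots> = of_int_mod_ring (int a)"
      proof (rule the_equality)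
        show "\<rho> = G ^^ nat (to_int_mod_ring (of_int_mod_ring (int a) :: 'p mod_ring))"
          using a \<rho>a by simp
        fix r :: "'p mod_ring" assume r: "\<rho> = G ^^ nat (to_int_mod_ring r)"
        have "to_int_mod_ring r \<in> {0..<int ?p}" using range_to_int_mod_ring by blast
        hence rr: "nat (to_int_mod_ring r) < ?p" "0 \<le> to_int_mod_ring r" by auto
        have "nat (to_int_mod_ring r) = a"
          using po r \<rho>a rr a by (auto simp: inj_on_def)
        hence "to_int_mod_ring r = int a" using rr by auto
        thus "r = of_int_mod_ring (int a)" by (metis of_int_mod_ring_to_int_mod_ring)
      qed
      finally show ?thesis .
    qed
    have z: "(of_int_mod_ring (int a) :: 'p mod_ring) = 0 \<longleftrightarrow> a = 0"
    proof
      assume "(of_int_mod_ring (int a) :: 'p mod_ring) = 0"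
      hence "to_int_mod_ring (of_int_mod_ring (int a) :: 'p mod_ring) = 0" by simp
      thus "a = 0" using a by simp
    qed simp
    have hb: "h \<beta> = \<rho> \<beta>" using assms(7) unfolding \<rho>_def restrict_perm_def by simp
    have "h \<beta> = \<beta> \<longleftrightarrow> a = 0"
    proof
      assume "a = 0" thus "h \<beta> = \<beta>" using hb \<rho>a by simp
    next
      assume hbb: "h \<beta> = \<beta>"
      show "a = 0"
      proof (rule ccontr)
        assume a0: "a \<noteq> 0"
        have "gcd a ?p = 1"
        proof -
          have "gcd a ?p dvd ?p" by simp
          hence "gcd a ?p = 1 \<or> gcd a ?p = ?p" using pp by (simp add: prime_nat_iff)
          moreover have "gcd a ?p \<noteq> ?p"
          proof
            assume "gcd a ?p = ?p" hence "?p dvd a" by (metis gcd_dvd1)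
            thus False using a a0 by (simp add: nat_dvd_not_less)
          qed
          ultimately show ?thesis by blast
        qed
        then obtain x y where xy: "a * x = ?p * y + 1" using bezout_nat[OF a0, of ?p] by auto
        have "((G^^a)^^x) \<beta> = \<beta>" using funpow_fix[of "G^^a" \<beta> x] hbb hb \<rho>a by simp
        hence "(G^^(a*x)) \<beta> = \<beta>" by (simp add: funpow_mult)
        moreover have "G^^(a*x) = G^^((a*x) mod ?p)" using funpow_mod_id[where G=G and d="?p"] po by blast
        moreover have "(a*x) mod ?p = 1"
        proof -
          have "(a*x) mod ?p = (1 + y * ?p) mod ?p" using xy by (simp add: ac_simps)
          also have "\<dots> = 1 mod ?p" by (metis mod_mult_self1 mod_mult_self2 mult.commute)
          finally show ?thesis using p1 by simp
        qed
        ultimately show False using Gb by simp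
      qed
    qed
    thus ?thesis using gj z by simp
  qed
  have "(gamma k \<Omega> g ` point_stabiliser H \<beta> :: 'p mod_ring vec set) = {v \<in> gamma k \<Omega> g ` H. v $ j = 0}"
    using stab unfolding point_stabiliser_def by auto
  also have "\<dots> = {v \<in> row_space M. v $ j = 0}"
    using assms(5) unfolding generator_matrix_def by simp
  also have "\<dots> = row_space (delete_row M i)"
    using row_space_delete[OF assms(4,6,8,9)] .
  finally show ?thesis .
qed

end
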